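(* Let $G_a$ and $G_b$ be graphs on a vertex set $V$ with $|V|=n$, let $h\le n-2$, and let $\mathbf w_a=f_h(G_a)$, $\mathbf w_b=f_h(G_b)$. If $\delta_{a,i}>\delta_{a,i+1}+2$ for all $i\in[h]$, then $\mathbf w_a=\mathbf w_a^U$ for every set $U\subseteq V$ of two vertices containing no entry of $\mathbf w_a$. Similarly, if $\delta_{b,i}>\delta_{b,i+1}+2$ for all $i\in[h]$, then $\mathbf w_b=\mathbf w_b^U$ for every two-vertex set $U\subseteq V$ containing no entry of $\mathbf w_b$.
   Context: For a graph $G$, $\delta_G=(\delta_{G,1},\dots,\delta_{G,n})$ is its degree sequence in decreasing order, with $\delta_{a,i}=\delta_{G_a,i}$, $\delta_{b,i}=\delta_{G_b,i}$. $f_h(G)$ is the vector $(w_1,\dots,w_h)$ of $h$ distinct vertices with $\deg_G(w_i)=\delta_{G,i}$ (the $h$ highest-degree vertices sorted by decreasing degree, ties broken arbitrarily). For a two-vertex set $U\subseteq V$, $\mathbf w_a^U=f_h(G_a[V\setminus U])$ and $\mathbf w_b^U=f_h(G_b[V\setminus U])$, where $G[W]$ denotes the induced subgraph on $W$. *)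

theory Defs
  imports Main "HOL-Library.Multiset"
begin

definition simple_graph :: "'a set \<Rightarrow> ('a \<Rightarrow> 'a \<Rightarrow> bool) \<Rightarrow> bool" where
  "simple_graph V E \<longleftrightarrow> finite V \<and> (\<forall>u v. E u v \<longrightarrow> E v u) \<and> (\<forall>v. \<not> E v v)
     \<and> (\<forall>u v. E u v \<longrightarrow> u \<in> V \<and> v \<in> V)"

definition ideg :: "('a \<Rightarrow> 'a \<Rightarrow> bool) \<Rightarrow> 'a set \<Rightarrow> 'a \<Rightarrow> nat" where
  "ideg E W v = card {u \<in> W. E u v}"

text \<open>Degree sequence of G[W] in decreasing order (0-based list: entry i is delta_(i+1)).\<close>
definition dseq :: "('a \<Rightarrow> 'a \<Rightarrow> bool) \<Rightarrow> 'a set \<Rightarrow> nat list" where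
  "dseq E W = rev (sorted_list_of_multiset (image_mset (ideg E W) (mset_set W)))"

text \<open>w is a valid value of f_h(G[W]) (ties broken arbitrarily): h distinct vertices of W,
  the i-th having degree delta_i in G[W].\<close>
definition is_fh :: "('a \<Rightarrow> 'a \<Rightarrow> bool) \<Rightarrow> 'a set \<Rightarrow> nat \<Rightarrow> 'a list \<Rightarrow> bool" where
  "is_fh E W h w \<longleftrightarrow> length w = h \<and> distinct w \<and> set w \<subseteq> W
     \<and> (\<forall>i<h. ideg E W (w ! i) = dseq E W ! i)"

end

theory Submission
  imports Defs
begin


lemma sortlem:
  fixes f :: "'a \<Rightarrow> nat"
  assumes W: "finite W" and dx: "distinct x" and sx: "set x \<subseteq> W"
    and sw: "sorted_wrt (>) (map f x)"
    and lt: "\<forall>v\<in>W - set x. \<forall>y\<in>set x. f v < f y"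
    and i: "i < length x"
  shows "rev (sorted_list_of_multiset (image_mset f (mset_set W))) ! i = f (x ! i)"
proof -
  define M2 where "M2 = image_mset f (mset_set (W - set x))"
  define L where "L = map f x @ rev (sorted_list_of_multiset M2)"
  have "mset_set W = mset_set (set x \<union> (W - set x))" using sx by (metis Un_Diff_cancel sup.absorb2)
  also have "\<dots> = mset_set (set x) + mset_set (W - set x)"
    by (rule mset_set_Union) (use W in auto)
  also have "\<dots> = mset x + mset_set (W - set x)" using dx by (simp add: mset_set_set)
  finally have "image_mset f (mset_set W) = mset (map f x) + M2" by (simp add: M2_def)
  hence m: "image_mset f (mset_set W) = mset (rev L)" by (simp add: L_def)
  have "sorted_wrt (\<ge>) L"
    unfolding L_def sorted_wrt_append
  proof (intro conjI)
    show "sorted_wrt (\<ge>) (map f x)" by (rule sorted_wrt_mono_rel[OF _ sw]) auto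
    show "sorted_wrt (\<ge>) (rev (sorted_list_of_multiset M2))"
      by (simp add: sorted_wrt_rev)
    show "\<forall>a\<in>set (map f x). \<forall>b\<in>set (rev (sorted_list_of_multiset M2)). b \<le> a"
      using lt by (auto simp: M2_def W intro: less_imp_le)
  qed
  hence "sorted (rev L)" by (simp add: sorted_wrt_rev)
  hence "sorted_list_of_multiset (image_mset f (mset_set W)) = rev L"
    by (simp only: m sorted_list_of_multiset_mset sorted_sort_id)
  thus ?thesis using i by (simp add: L_def nth_append)
qed

lemma main1:
  fixes E :: "'a \<Rightarrow> 'a \<Rightarrow> bool"
  assumes g: "simple_graph V E" and h: "h + 2 \<le> card V" and wa: "is_fh E V h wa"
    and gap: "\<forall>i\<in>{1..h}. dseq E V ! (i - 1) > dseq E V ! i + 2"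
    and UV: "U \<subseteq> V" and cU: "card U = 2" and dis: "set wa \<inter> U = {}"
    and w': "is_fh E (V - U) h w'"
  shows "w' = wa"
proof -
  define D where "D = dseq E V"
  define d where "d = ideg E V"
  define d' where "d' = ideg E (V - U)"
  define M where "M = image_mset d (mset_set V)"
  have fV: "finite V" using g by (simp add: simple_graph_def)
  have DM: "D = rev (sorted_list_of_multiset M)" by (simp add: D_def dseq_def M_def d_def)
  have mD: "mset D = M" by (simp add: DM)
  have lD: "length D = card V" by (metis mD M_def size_image_mset size_mset size_mset_set)
  have Dmono: "D ! j \<le> D ! i" if "i \<le> j" "j < length D" for i j
  proof -
    define S where "S = sorted_list_of_multiset M"
    have "sorted S" by (simp add: S_def)
    moreover have "length S = length D" by (simp add: DM S_def)
    ultimately show ?thesis using that unfolding DM S_def[symmetric]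
      by (simp add: rev_nth sorted_nth_mono)
  qed
  have lwa: "length wa = h" and dwa: "distinct wa" and swa: "set wa \<subseteq> V"
    and degwa: "\<And>i. i < h \<Longrightarrow> d (wa ! i) = D ! i"
    using wa by (auto simp: is_fh_def d_def D_def)
  have gap': "D ! (i + 1) + 2 < D ! i" if "i < h" for i
    using gap[rule_format, of "i+1"] that by (simp add: D_def)
  have A: "d v \<le> D ! h" if v: "v \<in> V" "v \<notin> set wa" for v
  proof (rule ccontr)
    assume "\<not> d v \<le> D ! h"
    hence dv: "D ! h < d v" by simp
    define P where "P = (\<lambda>x. D ! h < x)"
    have "filter P (drop h D) = []"
    proof -
      have "\<forall>x\<in>set (drop h D). \<not> P x"
        by (auto simp: P_def in_set_conv_nth) (metis Dmono le_add1 leD less_diff_conv add.commute)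
      thus ?thesis by (simp add: filter_empty_conv)
    qed
    hence "length (filter P D) = length (filter P (take h D))"
      by (metis append_Nil2 append_take_drop_id filter_append)
    also have "\<dots> \<le> length (take h D)" by (rule length_filter_le)
    also have "\<dots> \<le> h" by simp
    finally have "length (filter P D) \<le> h" .
    hence up: "size (filter_mset P M) \<le> h" by (metis mD mset_filter size_mset)
    have sub: "mset (v # wa) \<subseteq># mset_set V"
    proof -
      have "distinct (v # wa)" using v dwa by simp
      hence "mset (v # wa) = mset_set (set (v # wa))" by (simp only: mset_set_set)
      also have "\<dots> \<subseteq># mset_set V" using v swa fV by (intro subset_imp_msubset_mset_set) auto
      finally show ?thesis .
    qed
    have "filter_mset P (image_mset d (mset (v # wa))) \<subseteq># filter_mset P M"
      unfolding M_def by (intro multiset_filter_mono image_mset_subseteq_mono sub)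
    hence le: "size (filter_mset P (image_mset d (mset (v # wa)))) \<le> h"
      using up by (meson order.trans size_mset_mono)
    have allP: "\<forall>x\<in>set (v # wa). P (d x)"
    proof
      fix x assume "x \<in> set (v # wa)"
      then consider "x = v" | i where "i < h" "x = wa ! i" using lwa by (auto simp: in_set_conv_nth)
      thus "P (d x)"
      proof cases
        case 1 thus ?thesis using dv by (simp add: P_def)
      next
        case 2
        have "D ! h \<le> D ! (i + 1)" using 2 h lD by (intro Dmono) auto
        thus ?thesis using 2 gap'[OF 2(1)] degwa[OF 2(1)] by (simp add: P_def)
      qed
    qed
    have "filter_mset P (image_mset d (mset (v # wa))) = mset (map d (v # wa))"
      using allP by (simp only: mset_map[symmetric] mset_filter[symmetric]) (simp add: filter_id_conv)
    hence "size (filter_mset P (image_mset d (mset (v # wa)))) = h + 1" by (simp add: lwa)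
    thus False using le by simp
  qed
  have fin: "finite {u \<in> W. E u v}" if "W \<subseteq> V" for W v using fV that
    by (auto intro: finite_subset[of _ V])
  have deg1: "d' v \<le> d v" for v unfolding d_def d'_def ideg_def
    by (rule card_mono[OF fin]) auto
  have deg2: "d v \<le> d' v + 2" for v
  proof -
    have "{u \<in> V. E u v} \<subseteq> {u \<in> V - U. E u v} \<union> U" by auto
    hence "card {u \<in> V. E u v} \<le> card ({u \<in> V - U. E u v} \<union> U)"
      by (rule card_mono[rotated]) (use fin[of "V - U"] UV fV in \<open>auto intro: finite_subset\<close>)
    also have "\<dots> \<le> card {u \<in> V - U. E u v} + card U" by (rule card_Un_le)
    finally show ?thesis by (simp add: d_def d'_def ideg_def cU)
  qed
  have key: "d' (wa ! j) < d' (wa ! i)" if "i < j" "j < h" for i j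
  proof -
    have "D ! j \<le> D ! (i + 1)" using that h lD by (intro Dmono) auto
    thus ?thesis using deg1[of "wa ! j"] deg2[of "wa ! i"] degwa[of i] degwa[of j] gap'[of i] that
      by simp
  qed
  have key2: "d' v < d' (wa ! i)" if "v \<in> V - U" "v \<notin> set wa" "i < h" for v i
  proof -
    have "D ! h \<le> D ! (i + 1)" using that h lD by (intro Dmono) auto
    thus ?thesis using A[of v] that deg1[of v] deg2[of "wa ! i"] degwa[of i] gap'[of i] by simp
  qed
  have sw: "sorted_wrt (>) (map d' wa)"
    by (auto simp: sorted_wrt_iff_nth_less lwa key)
  have D': "dseq E (V - U) ! i = d' (wa ! i)" if "i < h" for i
    unfolding dseq_def d'_def[symmetric]
    by (rule sortlem) (use fV dwa swa dis sw key2 that lwa in \<open>auto simp: in_set_conv_nth\<close>)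
  have lw': "length w' = h" and sw': "set w' \<subseteq> V - U"
    and degw': "\<And>i. i < h \<Longrightarrow> d' (w' ! i) = dseq E (V - U) ! i"
    using w' by (auto simp: is_fh_def d'_def)
  show ?thesis
  proof (rule nth_equalityI)
    show "length w' = length wa" using lw' lwa by simp
    fix i assume "i < length w'"
    hence i: "i < h" using lw' by simp
    have e: "d' (w' ! i) = d' (wa ! i)" using degw'[OF i] D'[OF i] by simp
    have mem: "w' ! i \<in> V - U" using sw' i lw' nth_mem[of i w'] by blast
    show "w' ! i = wa ! i"
    proof (cases "w' ! i \<in> set wa")
      case False thus ?thesis using key2[OF mem False i] e by simp
    next
      case True
      then obtain j where j: "j < h" "w' ! i = wa ! j" using lwa by (auto simp: in_set_conv_nth)
      show ?thesis
      proof (cases "i = j")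
        case True thus ?thesis using j by simp
      next
        case False
        hence "i < j \<or> j < i" by arith
        thus ?thesis using key[of i j] key[of j i] i j e by auto
      qed
    qed
  qed
qed


theorem lemma4p13:
  fixes V :: "'a set" and Ea Eb :: "'a \<Rightarrow> 'a \<Rightarrow> bool" and n h :: nat
    and wa wb :: "'a list"
  assumes ga: "simple_graph V Ea" and gb: "simple_graph V Eb"
    and n: "card V = n" and h: "h + 2 \<le> n"
    and wa: "is_fh Ea V h wa" and wb: "is_fh Eb V h wb"
  shows "((\<forall>i\<in>{1..h}. dseq Ea V ! (i - 1) > dseq Ea V ! i + 2) \<longrightarrow>
            (\<forall>U. U \<subseteq> V \<and> card U = 2 \<and> set wa \<inter> U = {} \<longrightarrow>
                 (\<forall>w'. is_fh Ea (V - U) h w' \<longrightarrow> w' = wa)))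
       \<and> ((\<forall>i\<in>{1..h}. dseq Eb V ! (i - 1) > dseq Eb V ! i + 2) \<longrightarrow>
            (\<forall>U. U \<subseteq> V \<and> card U = 2 \<and> set wb \<inter> U = {} \<longrightarrow>
                 (\<forall>w'. is_fh Eb (V - U) h w' \<longrightarrow> w' = wb)))"
proof (intro conjI impI allI)
  fix U w'
  assume "\<forall>i\<in>{1..h}. dseq Ea V ! (i - 1) > dseq Ea V ! i + 2"
    "U \<subseteq> V \<and> card U = 2 \<and> set wa \<inter> U = {}" "is_fh Ea (V - U) h w'"
  thus "w' = wa" using main1[OF ga _ wa] h n by blast
next
  fix U w'
  assume "\<forall>i\<in>{1..h}. dseq Eb V ! (i - 1) > dseq Eb V ! i + 2"
    "U \<subseteq> V \<and> card U = 2 \<and> set wb \<inter> U = {}" "is_fh Eb (V - U) h w'"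
  thus "w' = wb" using main1[OF gb _ wb] h n by blast
qed

end
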